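(* Fix a Bergman tree $\mathcal{T}_n$ with parameter $\lambda>0$. There exists $\varrho>0$ such that for every $\alpha\in\mathcal{T}_n$ with $\alpha\neq o$, $$\bigcup_{\beta\ge\alpha}K_\beta\subseteq V^{\varrho}_{c_\alpha},\qquad\text{where } V^\varrho_z=\Big\{w\in\mathbb{B}_n:\Big|1-w\cdot\tfrac{z}{|z|}\Big|\le\varrho(1-|z|)\Big\}.$$
   Context: Notation: $\mathbb{B}_n$ is the open unit ball of $\mathbb{C}^n$, $z\cdot w=\sum_j z_j\overline{w_j}$. For $z\in\mathbb{B}_n$, $\varphi_z$ is the involutive automorphism of $\mathbb{B}_n$ interchanging $0$ and $z$; the Bergman metric is $d(z,w)=\frac12\log\frac{1+|\varphi_z(w)|}{1-|\varphi_z(w)|}$, and $D(z,r)=\{w:d(z,w)<r\}$. Bergman tree with parameter $\lambda>0$: for $r>0$ let $S_r=\{z:d(0,z)=r\}$ and for $z\neq0$ let $P_rz$ be the point of $S_r$ on the ray $\{tz:t>0\}$. For each integer $N\ge1$ fix points $z^N_1,\dots,z^N_{J_N}\in S_{\lambda N}$ and a partition of $S_{\lambda N}$ into Borel sets $Q^N_1,\dots,Q^N_{J_N}$ with $B_N(z^N_j,\lambda/2)\subseteq Q^N_j\subseteq B_N(z^N_j,2\lambda)$, where $B_N(z,s)=S_{\lambda N}\cap D(z,s)$. Set $K^N_j=\{z:\lambda N\le d(0,z)<\lambda(N+1),\ P_{\lambda N}z\in Q^N_j\}$ with center $c^N_j=P_{\lambda(N+1/2)}z^N_j$; the root is $K_o=\{z:d(0,z)<\lambda\}$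 with center $0$. $\mathcal{T}_n$ is the index set consisting of $o$ and all pairs $\alpha=(N,j)$; write $K_\alpha$, $c_\alpha$ and $d(\alpha)=N$ (with $d(o)=0$). Tree structure: $(N+1,i)$ is a child of $(N,j)$ (for $N\ge1$) if $P_{\lambda N}c^{N+1}_i\in Q^N_j$, and every $(1,j)$ is a child of $o$. Write $\beta\ge\alpha$ if $\beta$ equals $\alpha$ or is a descendant of $\alpha$. *)

theory Defs
  imports "HOL-Analysis.Analysis"
begin

text \<open>Points of C^n are vectors of type complex^'n (n = CARD('n), arbitrary).\<close>

definition cdot :: "complex^'n \<Rightarrow> complex^'n \<Rightarrow> complex" where
  "cdot z w = (\<Sum>j\<in>UNIV. z $ j * cnj (w $ j))"

definition unit_ball :: "(complex^'n) set" where
  "unit_ball = ball 0 1"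

definition proj_line :: "complex^'n \<Rightarrow> complex^'n \<Rightarrow> complex^'n" where
  "proj_line z w = (if z = 0 then 0 else (cdot w z / cdot z z) *s z)"

text \<open>The involutive automorphism interchanging 0 and z (Rudin's formula).\<close>
definition phi :: "complex^'n \<Rightarrow> complex^'n \<Rightarrow> complex^'n" where
  "phi z w = (1 / (1 - cdot w z)) *s
     (z - proj_line z w - complex_of_real (sqrt (1 - (norm z)\<^sup>2)) *s (w - proj_line z w))"

definition bdist :: "complex^'n \<Rightarrow> complex^'n \<Rightarrow> real" where
  "bdist z w = 1/2 * ln ((1 + norm (phi z w)) / (1 - norm (phi z w)))"

definition bdisc :: "complex^'n \<Rightarrow> real \<Rightarrow> (complex^'n) set" where
  "bdisc z r = {w \<in> unit_ball. bdist z w < r}"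

definition bsphere :: "real \<Rightarrow> (complex^'n) set" where
  "bsphere r = {z \<in> unit_ball. bdist 0 z = r}"

definition rayproj :: "real \<Rightarrow> complex^'n \<Rightarrow> complex^'n" where
  "rayproj r z = (THE w. w \<in> bsphere r \<and> (\<exists>t::real>0. w = complex_of_real t *s z))"

text \<open>Tree indices: None is the root o, Some (N,j) is the pair (N,j).\<close>
type_synonym tidx = "(nat \<times> nat) option"

definition tree_nodes :: "(nat \<Rightarrow> nat) \<Rightarrow> tidx set" where
  "tree_nodes J = insert None {Some (N, j) | N j. 1 \<le> N \<and> 1 \<le> j \<and> j \<le> J N}"

definition bergman_tree_data ::
  "real \<Rightarrow> (nat \<Rightarrow> nat) \<Rightarrow> (nat \<Rightarrow> nat \<Rightarrow> complex^'n) \<Rightarrow> (nat \<Rightarrow> nat \<Rightarrow> (complex^'n) set) \<Rightarrow> bool" where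
  "bergman_tree_data lam J zz Q \<longleftrightarrow> lam > 0 \<and>
     (\<forall>N\<ge>1.
        (\<forall>j\<in>{1..J N}. zz N j \<in> bsphere (lam * real N) \<and> Q N j \<in> sets borel \<and>
            bsphere (lam * real N) \<inter> bdisc (zz N j) (lam / 2) \<subseteq> Q N j \<and>
            Q N j \<subseteq> bsphere (lam * real N) \<inter> bdisc (zz N j) (2 * lam)) \<and>
        (\<Union>j\<in>{1..J N}. Q N j) = bsphere (lam * real N) \<and>
        (\<forall>i\<in>{1..J N}. \<forall>j\<in>{1..J N}. i \<noteq> j \<longrightarrow> Q N i \<inter> Q N j = {}))"

definition tree_box :: "real \<Rightarrow> (nat \<Rightarrow> nat \<Rightarrow> (complex^'n) set) \<Rightarrow> tidx \<Rightarrow> (complex^'n) set" where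
  "tree_box lam Q a = (case a of
      None \<Rightarrow> {z \<in> unit_ball. bdist 0 z < lam}
    | Some (N, j) \<Rightarrow> {z \<in> unit_ball. lam * real N \<le> bdist 0 z \<and> bdist 0 z < lam * (real N + 1) \<and>
                                      rayproj (lam * real N) z \<in> Q N j})"

definition tree_center :: "real \<Rightarrow> (nat \<Rightarrow> nat \<Rightarrow> complex^'n) \<Rightarrow> tidx \<Rightarrow> complex^'n" where
  "tree_center lam zz a = (case a of
      None \<Rightarrow> 0
    | Some (N, j) \<Rightarrow> rayproj (lam * (real N + 1/2)) (zz N j))"

definition is_child ::
  "real \<Rightarrow> (nat \<Rightarrow> nat) \<Rightarrow> (nat \<Rightarrow> nat \<Rightarrow> complex^'n) \<Rightarrow> (nat \<Rightarrow> nat \<Rightarrow> (complex^'n) set) \<Rightarrow> tidx \<Rightarrow> tidx \<Rightarrow> bool" where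
  "is_child lam J zz Q b a \<longleftrightarrow> a \<in> tree_nodes J \<and> b \<in> tree_nodes J \<and>
     (case (a, b) of
        (None, Some (M, i)) \<Rightarrow> M = 1
      | (Some (N, j), Some (M, i)) \<Rightarrow> M = N + 1 \<and> rayproj (lam * real N) (tree_center lam zz b) \<in> Q N j
      | _ \<Rightarrow> False)"

definition tree_ge ::
  "real \<Rightarrow> (nat \<Rightarrow> nat) \<Rightarrow> (nat \<Rightarrow> nat \<Rightarrow> complex^'n) \<Rightarrow> (nat \<Rightarrow> nat \<Rightarrow> (complex^'n) set) \<Rightarrow> tidx \<Rightarrow> tidx \<Rightarrow> bool" where
  "tree_ge lam J zz Q b a \<longleftrightarrow> (\<lambda>x y. is_child lam J zz Q y x)\<^sup>*\<^sup>* a b"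

definition Vregion :: "real \<Rightarrow> complex^'n \<Rightarrow> (complex^'n) set" where
  "Vregion rho z = {w \<in> unit_ball. cmod (1 - cdot w ((1 / complex_of_real (norm z)) *s z)) \<le> rho * (1 - norm z)}"

end

theory Submission
  imports Defs
begin

lemma tanh_artanh: assumes "\<bar>x::real\<bar> < 1" shows "tanh (artanh x) = x"
proof -
  have p: "(1+x)/(1-x) > 0" using assms by (auto simp: abs_less_iff)
  have "exp (- 2 * artanh x) = (1-x)/(1+x)"
    using p assms by (simp add: artanh_def exp_minus exp_ln field_simps)
  moreover have "1 + x > 0" using assms by (auto simp: abs_less_iff)
  ultimately have "tanh (artanh x) = (1 - (1-x)/(1+x)) / (1 + (1-x)/(1+x))"
    by (simp only: tanh_real_altdef)
  also have "\<dots> = x" using \<open>1+x>0\<close> by (simp add: field_simps)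
  finally show ?thesis .
qed

lemma normsq_vec: "(norm (x::complex^'n))^2 = (\<Sum>i\<in>UNIV. (cmod (x$i))^2)"
  by (simp add: norm_vec_def L2_set_def sum_nonneg)

lemma cdot_self: "cdot x x = complex_of_real ((norm x)^2)"
proof -
  have "\<And>j. x$j * cnj (x$j) = complex_of_real ((cmod (x$j))^2)"
    by (metis complex_norm_square)
  then show ?thesis by (simp add: normsq_vec cdot_def of_real_sum)
qed

lemma cdot_cs: "cmod (cdot x y) \<le> norm x * norm y"
proof -
  have "cmod (cdot x y) \<le> (\<Sum>i\<in>UNIV. cmod (x$i * cnj (y$i)))"
    unfolding cdot_def by (rule norm_sum)
  also have "\<dots> = (\<Sum>i\<in>UNIV. \<bar>cmod (x$i)\<bar> * \<bar>cmod (y$i)\<bar>)" by (simp add: norm_mult)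
  also have "\<dots> \<le> L2_set (\<lambda>i. cmod (x$i)) UNIV * L2_set (\<lambda>i. cmod (y$i)) UNIV"
    by (rule L2_set_mult_ineq)
  finally show ?thesis by (simp add: norm_vec_def)
qed

lemma cdot_add1: "cdot (x + y) w = cdot x w + cdot y w"
  by (simp add: cdot_def sum.distrib distrib_right)
lemma cdot_diff1: "cdot (x - y) w = cdot x w - cdot y w"
  by (simp add: cdot_def sum_subtractf left_diff_distrib)
lemma cdot_add2: "cdot w (x + y) = cdot w x + cdot w y"
  by (simp add: cdot_def sum.distrib distrib_left)
lemma cdot_diff2: "cdot w (x - y) = cdot w x - cdot w y"
  by (simp add: cdot_def sum_subtractf right_diff_distrib)
lemma cdot_smult1: "cdot (c *s x) w = c * cdot x w"
  by (simp add: cdot_def sum_distrib_left mult.assoc)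
lemma cdot_smult2: "cdot w (c *s x) = cnj c * cdot w x"
  by (simp add: cdot_def sum_distrib_left mult.assoc mult.left_commute)
lemma cdot_cnj: "cnj (cdot x y) = cdot y x"
  by (simp add: cdot_def mult.commute)
lemma cdot_zero2: "cdot x 0 = 0" by (simp add: cdot_def)
lemma cdot_zero1: "cdot 0 x = 0" by (simp add: cdot_def)

lemma norm_smult: "norm (c *s (x::complex^'n)) = cmod c * norm x"
proof -
  have "complex_of_real ((norm (c *s x))^2) = complex_of_real ((cmod c * norm x)^2)"
    by (simp only: cdot_self[symmetric] cdot_smult1 cdot_smult2)
       (simp add: cdot_self complex_norm_square[symmetric] power_mult_distrib mult.commute del: of_real_power)
  then have "(norm (c *s x))^2 = (cmod c * norm x)^2" by (simp only: of_real_eq_iff)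
  then show ?thesis by (simp add: power2_eq_iff_nonneg)
qed

lemma phi_identity:
  assumes z0: "z \<noteq> 0" and z1: "norm z < 1" and w1: "norm w < 1"
  shows "(norm (phi z w))^2 * (cmod (1 - cdot w z))^2 =
         (cmod (1 - cdot w z))^2 - (1 - (norm z)^2) * (1 - (norm w)^2)"
proof -
  define A where "A = cdot w z"
  define s where "s = sqrt (1 - (norm z)^2)"
  define v where "v = z - proj_line z w - complex_of_real s *s (w - proj_line z w)"
  define Z where "Z = cdot z z"
  define W where "W = cdot w w"
  define S where "S = complex_of_real s"
  have ss: "s^2 = 1 - (norm z)^2" unfolding s_def using z1
    by (simp add: abs_square_less_1 less_imp_le)
  have Zr: "Z = complex_of_real ((norm z)^2)" by (simp add: Z_def cdot_self)
  have Wr: "W = complex_of_real ((norm w)^2)" by (simp add: W_def cdot_self)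
  have SS: "S * S = 1 - Z" unfolding S_def Zr
    by (metis ss of_real_1 of_real_diff of_real_mult power2_eq_square)
  have cZ: "cnj Z = Z" by (simp add: Zr)
  have cS: "cnj S = S" by (simp add: S_def)
  have Zne: "Z \<noteq> 0" using z0 by (simp add: Zr)
  have ph: "phi z w = (1 / (1 - A)) *s v" unfolding phi_def v_def A_def s_def by simp
  have pl: "proj_line z w = (A / Z) *s z"
    using z0 by (simp add: proj_line_def A_def Z_def)
  have cz: "cdot z w = cnj A" by (simp add: A_def cdot_cnj)
  have "cdot v v = (1-A)*(1-cnj A) - (1-Z)*(1-W)"
    unfolding v_def pl
    apply (simp only: cdot_add1 cdot_add2 cdot_diff1 cdot_diff2 cdot_smult1 cdot_smult2 cz
       flip: A_def Z_def W_def S_def)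
    apply (simp add: S_def[symmetric] complex_cnj_divide cZ cS)
    using Zne SS apply (simp add: field_simps)
    using SS by algebra
  also have "\<dots> = complex_of_real ((cmod (1 - A))^2 - (1 - (norm z)^2) * (1 - (norm w)^2))"
    using complex_norm_square[of "1-A"] by (simp add: Zr Wr complex_cnj_diff)
  finally have nv: "(norm v)^2 = (cmod (1 - A))^2 - (1 - (norm z)^2) * (1 - (norm w)^2)"
    by (simp only: cdot_self of_real_eq_iff)
  have "cmod A \<le> norm w * norm z" unfolding A_def by (rule cdot_cs)
  also have "\<dots> < 1" using z1 w1 mult_strict_mono[of "norm w" 1 "norm z" 1] by simp  
  finally have "A \<noteq> 1" by auto
  then have "1 - A \<noteq> 0" by simp
  then show ?thesis
    by (simp add: ph norm_smult nv A_def[symmetric] power_mult_distrib norm_divide field_simps)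
qed

lemma in_unit_ball: "z \<in> unit_ball \<longleftrightarrow> norm z < 1"
  by (simp add: unit_ball_def)

lemma bdist0: "bdist 0 z = artanh (norm z)"
proof -
  have "phi 0 z = - z" by (simp add: phi_def proj_line_def cdot_zero2)
  then show ?thesis by (simp add: bdist_def artanh_def)
qed

lemma bsphere_iff: assumes "R > 0" shows "z \<in> bsphere R \<longleftrightarrow> norm z = tanh R"
proof
  assume "z \<in> bsphere R"
  then have "norm z < 1" "artanh (norm z) = R" by (auto simp: bsphere_def in_unit_ball bdist0)
  then show "norm z = tanh R" using tanh_artanh[of "norm z"] by auto
next
  assume "norm z = tanh R"
  then show "z \<in> bsphere R" by (simp add: bsphere_def in_unit_ball bdist0 artanh_tanh_real tanh_real_lt_1)
qed

lemma rayproj_eq: assumes R: "R > 0" and z: "z \<noteq> 0"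
  shows "rayproj R z = complex_of_real (tanh R / norm z) *s z"
  unfolding rayproj_def
proof (rule the_equality)
  show "complex_of_real (tanh R / norm z) *s z \<in> bsphere R \<and>
    (\<exists>t>0. complex_of_real (tanh R / norm z) *s z = complex_of_real t *s z)"
    using R z by (auto simp: bsphere_iff norm_smult norm_divide intro!: exI[of _ "tanh R / norm z"])
next
  fix w assume "w \<in> bsphere R \<and> (\<exists>t>0. w = complex_of_real t *s z)"
  then obtain t where t: "t > 0" "w = complex_of_real t *s z" and "norm w = tanh R"
    using R by (auto simp: bsphere_iff)
  then have "t * norm z = tanh R" by (simp add: norm_smult)
  then have "t = tanh R / norm z" using z by (simp add: field_simps)
  then show "w = complex_of_real (tanh R / norm z) *s z" using t by simp
qed

lemma same_sphere:
  assumes zw: "norm z = r" "norm w = r" and r: "0 < r" "r < 1" and d: "bdist z w < D"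
  shows "cmod (1 - cdot w z) \<le> (1 - r^2) / sqrt (1 - (tanh D)^2)"
proof -
  define p where "p = norm (phi z w)"
  define A where "A = cdot w z"
  have z0: "z \<noteq> 0" using zw r by auto
  have idt: "p^2 * (cmod (1 - A))^2 = (cmod (1 - A))^2 - (1 - r^2) * (1 - r^2)"
    using phi_identity[OF z0, of w] zw r by (simp add: p_def A_def)
  have pos: "(1 - r^2) * (1 - r^2) > 0" using r by (simp add: abs_square_less_1)
  have e: "(1 - p^2) * (cmod (1 - A))^2 = (1 - r^2) * (1 - r^2)" using idt by (simp add: algebra_simps)
  have "1 - p^2 > 0"
  proof (rule ccontr)
    assume "\<not> 1 - p^2 > 0"
    then have "(1 - p^2) * (cmod (1 - A))^2 \<le> 0" by (simp add: mult_nonpos_nonneg)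
    then show False using e pos by simp
  qed
  then have p1: "p < 1" "p \<ge> 0" using abs_square_less_1[of p] by (auto simp: p_def)
  have "bdist z w = artanh p" by (simp add: bdist_def artanh_def p_def)
  then have "artanh p < D" using d by simp
  then have "tanh (artanh p) < tanh D" by simp
  then have pt: "p < tanh D" using p1 tanh_artanh[of p] by simp
  have t1: "tanh D < 1" by (rule tanh_real_lt_1)
  have k: "1 - (tanh D)^2 > 0" using pt p1 t1
  proof -
    have "\<bar>tanh D\<bar> < 1" using pt p1 t1 by linarith
    then show ?thesis using abs_square_less_1[of "tanh D"] by simp
  qed
  have "p^2 \<le> (tanh D)^2" using pt p1 by (simp add: power_mono)
  then have "(1 - (tanh D)^2) * (cmod (1 - A))^2 \<le> (1 - p^2) * (cmod (1 - A))^2"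
    by (simp add: mult_right_mono)
  also have "\<dots> = (1 - r^2)^2" using e by (simp add: power2_eq_square)
  finally have "(cmod (1 - A))^2 \<le> (1 - r^2)^2 / (1 - (tanh D)^2)"
    using k by (simp add: pos_le_divide_eq mult.commute)
  also have "\<dots> = ((1 - r^2) / sqrt (1 - (tanh D)^2))^2"
    using k by (simp add: power_divide)
  finally have sq: "(cmod (1 - A))^2 \<le> ((1 - r^2) / sqrt (1 - (tanh D)^2))^2" .
  have r2: "0 \<le> 1 - r^2" using r by (simp add: abs_square_le_1)
  have "0 \<le> (1 - r^2) / sqrt (1 - (tanh D)^2)" using r2 k
    by (intro divide_nonneg_nonneg) (simp_all only: real_sqrt_ge_zero less_imp_le)
  then have "cmod (1 - A) \<le> (1 - r^2) / sqrt (1 - (tanh D)^2)"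
    using sq power2_le_imp_le by blast
  then show ?thesis by (simp add: A_def)
qed

definition udir :: "complex^'n \<Rightarrow> complex^'n" where
  "udir x = (1 / complex_of_real (norm x)) *s x"

lemma norm_udir: "x \<noteq> 0 \<Longrightarrow> norm (udir x) = 1"
  by (simp add: udir_def norm_smult norm_divide)

lemma udir_decomp: "x \<noteq> 0 \<Longrightarrow> x = complex_of_real (norm x) *s udir x"
  by (simp add: udir_def vector_smult_assoc)

lemma udir_scale: assumes "t > 0" shows "udir (complex_of_real t *s x) = udir x"
  using assms by (simp add: udir_def vector_smult_assoc norm_smult)

lemma cdot_unit_le: "norm a = 1 \<Longrightarrow> norm b = 1 \<Longrightarrow> cmod (cdot a b) \<le> 1"
  using cdot_cs[of a b] by simp

lemma dir_bound:
  assumes zw: "norm z = r" "norm w = r" and r: "0 < r" "r < 1" and d: "bdist z w < D"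
  shows "cmod (1 - cdot (udir w) (udir z)) \<le> (1 / sqrt (1 - (tanh D)^2) + 1) * (1 - r^2)"
proof -
  have z0: "z \<noteq> 0" and w0: "w \<noteq> 0" using zw r by auto
  define c where "c = cdot (udir w) (udir z)"
  have "cdot w z = cdot (complex_of_real r *s udir w) (complex_of_real r *s udir z)"
    using udir_decomp[OF z0] udir_decomp[OF w0] zw by simp
  also have "\<dots> = complex_of_real (r^2) * c" by (simp add: cdot_smult1 cdot_smult2 c_def power2_eq_square)
  finally have cw: "cdot w z = complex_of_real (r^2) * c" .
  have c1: "cmod c \<le> 1" unfolding c_def using norm_udir z0 w0 by (intro cdot_unit_le) auto
  have "1 - c = (1 - complex_of_real (r^2) * c) - complex_of_real (1 - r^2) * c" by (simp add: algebra_simps)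
  then have "cmod (1 - c) \<le> cmod (1 - complex_of_real (r^2) * c) + cmod (complex_of_real (1 - r^2) * c)"
    by (metis norm_triangle_ineq4)
  also have "cmod (complex_of_real (1 - r^2) * c) \<le> (1 - r^2)"
  proof -
    have r2: "0 \<le> 1 - r^2" using r by (simp add: abs_square_le_1)
    have "cmod (complex_of_real (1 - r^2) * c) = \<bar>1 - r^2\<bar> * cmod c" by (simp only: norm_mult norm_of_real)
    also have "\<dots> = (1 - r^2) * cmod c" using r2 by simp
    also have "\<dots> \<le> (1 - r^2) * 1" using r2 c1 by (intro mult_left_mono) auto
    finally show ?thesis by simp
  qed
  also have "cmod (1 - complex_of_real (r^2) * c) \<le> (1 - r^2) / sqrt (1 - (tanh D)^2)"
    using same_sphere[OF zw r d] cw by simp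
  finally show ?thesis by (simp add: c_def algebra_simps)
qed

lemma tri_dir:
  assumes "norm x = 1" "norm y = 1" "norm z = 1"
  shows "sqrt (cmod (1 - cdot x z)) \<le> sqrt (cmod (1 - cdot x y)) + sqrt (cmod (1 - cdot y z))"
proof -
  define a where "a = cmod (1 - cdot x y)"
  define b where "b = cmod (1 - cdot y z)"
  have yy: "cdot y y = 1" using assms by (simp add: cdot_self)
  have xx: "cdot x x = 1" using assms by (simp add: cdot_self)
  have zz: "cdot z z = 1" using assms by (simp add: cdot_self)
  have idt: "1 - cdot x z = (1 - cdot x y) + (1 - cdot y z) - cdot (x - y) (z - y)"
    by (simp add: cdot_diff1 cdot_diff2 yy)
  have nxy: "(norm (x - y))^2 \<le> 2 * a"
  proof -
    have q: "complex_of_real ((norm (x - y))^2) = 2 - (cdot x y + cnj (cdot x y))"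
      by (simp only: cdot_self[symmetric]) (simp add: cdot_diff1 cdot_diff2 xx yy cdot_cnj)
    have "(norm (x - y))^2 = 2 - 2 * Re (cdot x y)"
      using arg_cong[OF q, of Re] by (simp del: of_real_power)
    also have "\<dots> = 2 * Re (1 - cdot x y)" by simp
    also have "\<dots> \<le> 2 * a" unfolding a_def using complex_Re_le_cmod[of "1 - cdot x y"] by simp
    finally show ?thesis .
  qed
  have nzy: "(norm (z - y))^2 \<le> 2 * b"
  proof -
    have q: "complex_of_real ((norm (z - y))^2) = 2 - (cdot y z + cnj (cdot y z))"
      by (simp only: cdot_self[symmetric]) (simp add: cdot_diff1 cdot_diff2 zz yy cdot_cnj)
    have "(norm (z - y))^2 = 2 - 2 * Re (cdot y z)"
      using arg_cong[OF q, of Re] by (simp del: of_real_power)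
    also have "\<dots> = 2 * Re (1 - cdot y z)" by simp
    also have "\<dots> \<le> 2 * b" unfolding b_def using complex_Re_le_cmod[of "1 - cdot y z"] by simp
    finally show ?thesis .
  qed
  have a0: "a \<ge> 0" "b \<ge> 0" by (auto simp: a_def b_def)
  have "norm (x - y) \<le> sqrt (2 * a)" using nxy by (simp add: real_le_rsqrt)
  moreover have "norm (z - y) \<le> sqrt (2 * b)" using nzy by (simp add: real_le_rsqrt)
  ultimately have "norm (x - y) * norm (z - y) \<le> sqrt (2 * a) * sqrt (2 * b)"
    using a0 by (intro mult_mono) auto
  also have "\<dots> = 2 * sqrt a * sqrt b" by (simp add: real_sqrt_mult)
  finally have pr: "norm (x - y) * norm (z - y) \<le> 2 * sqrt a * sqrt b" .
  have "cmod (1 - cdot x z) \<le> cmod ((1 - cdot x y) + (1 - cdot y z)) + cmod (cdot (x - y) (z - y))"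
    unfolding idt by (rule norm_triangle_ineq4)
  also have "\<dots> \<le> a + b + norm (x - y) * norm (z - y)"
    using norm_triangle_ineq[of "1 - cdot x y" "1 - cdot y z"] cdot_cs[of "x - y" "z - y"]
    unfolding a_def b_def by linarith
  also have "\<dots> \<le> a + b + 2 * sqrt a * sqrt b" using pr by simp
  also have "\<dots> = (sqrt a + sqrt b)^2" using a0 by (simp add: power2_eq_square algebra_simps)
  finally have "cmod (1 - cdot x z) \<le> (sqrt a + sqrt b)^2" .
  then have "sqrt (cmod (1 - cdot x z)) \<le> sqrt ((sqrt a + sqrt b)^2)" by (rule real_sqrt_le_mono)
  then show ?thesis using a0 by (simp add: a_def b_def)
qed

lemma tanh_gap_upper: assumes "(x::real) \<ge> 0" shows "1 - tanh x \<le> 2 * exp (- 2 * x)"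
proof -
  define e where "e = exp (- 2 * x)"
  have e0: "e > 0" by (simp add: e_def)
  have te: "tanh x = (1 - e) / (1 + e)" by (simp only: tanh_real_altdef e_def)
  have "1 - tanh x = 2 * e / (1 + e)" using e0 unfolding te by (simp add: field_simps)
  also have "\<dots> \<le> 2 * e" using e0 by (simp add: field_simps)
  finally show ?thesis by (simp add: e_def)
qed

lemma tanh_gap_lower: assumes "(x::real) \<ge> 0" shows "exp (- 2 * x) \<le> 1 - tanh x"
proof -
  define e where "e = exp (- 2 * x)"
  have e0: "e > 0" by (simp add: e_def)
  have e1: "e \<le> 1" using assms by (simp add: e_def)
  have te: "tanh x = (1 - e) / (1 + e)" by (simp only: tanh_real_altdef e_def)
  have "1 - tanh x = 2 * e / (1 + e)" using e0 unfolding te by (simp add: field_simps)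
  moreover have "e \<le> 2 * e / (1 + e)" using e0 e1 by (simp add: field_simps)
  ultimately show ?thesis by (simp add: e_def)
qed

lemma tanh_sq_gap: assumes "(x::real) \<ge> 0" shows "1 - (tanh x)^2 \<le> 4 * exp (- 2 * x)"
proof -
  have t: "tanh x \<ge> 0" "tanh x < 1" using assms tanh_real_lt_1 by auto
  have "1 - (tanh x)^2 = (1 - tanh x) * (1 + tanh x)" by (simp add: power2_eq_square algebra_simps)
  also have "\<dots> \<le> (2 * exp (- 2 * x)) * 2"
    using t tanh_gap_upper[OF assms] by (intro mult_mono) auto
  finally show ?thesis by simp
qed


lemma tree_nodes_Some: "Some (N, j) \<in> tree_nodes J \<longleftrightarrow> 1 \<le> N \<and> 1 \<le> j \<and> j \<le> J N"
  by (auto simp: tree_nodes_def)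

context
  fixes lam :: real and J :: "nat \<Rightarrow> nat"
    and zz :: "nat \<Rightarrow> nat \<Rightarrow> complex^'n"
    and Q :: "nat \<Rightarrow> nat \<Rightarrow> (complex^'n) set"
  assumes bt: "bergman_tree_data lam J zz Q"
begin

lemma lam_pos: "lam > 0" using bt by (simp add: bergman_tree_data_def)

lemma node_facts:
  assumes "Some (N, j) \<in> tree_nodes J"
  shows "N \<ge> 1" "norm (zz N j) = tanh (lam * real N)" "zz N j \<noteq> 0"
    "Q N j \<subseteq> bsphere (lam * real N) \<inter> bdisc (zz N j) (2 * lam)"
proof -
  have N: "N \<ge> 1" "j \<in> {1..J N}" using assms by (auto simp: tree_nodes_Some)
  then show "N \<ge> 1" by simp
  have lN: "lam * real N > 0" using lam_pos N by simp
  from bt N have zs: "zz N j \<in> bsphere (lam * real N)"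
    and Qs: "Q N j \<subseteq> bsphere (lam * real N) \<inter> bdisc (zz N j) (2 * lam)"
    unfolding bergman_tree_data_def by blast+
  show "norm (zz N j) = tanh (lam * real N)" using bsphere_iff[OF lN, of "zz N j"] zs by blast
  then show "zz N j \<noteq> 0" using lN by auto
  show "Q N j \<subseteq> bsphere (lam * real N) \<inter> bdisc (zz N j) (2 * lam)" by fact
qed

definition K1 where "K1 = 1 / sqrt (1 - (tanh (2 * lam))^2) + 1"

lemma in_Q_bound:
  assumes a: "Some (N, j) \<in> tree_nodes J" and p: "p \<in> Q N j"
  shows "cmod (1 - cdot (udir p) (udir (zz N j))) \<le> K1 * (1 - (tanh (lam * real N))^2)"
proof -
  note nf = node_facts[OF a]
  have lN: "lam * real N > 0" using lam_pos nf(1) by simp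
  have "p \<in> bsphere (lam * real N)" "p \<in> bdisc (zz N j) (2 * lam)" using nf(4) p by auto
  then have np: "norm p = tanh (lam * real N)" and d: "bdist (zz N j) p < 2 * lam"
    using bsphere_iff[OF lN] by (auto simp: bdisc_def)
  show ?thesis unfolding K1_def
    by (rule dir_bound[OF nf(2) np]) (use lN tanh_real_lt_1 d in auto)
qed

lemma child_bound:
  assumes a: "Some (N, j) \<in> tree_nodes J" and c: "Some (N + 1, i) \<in> tree_nodes J"
    and ch: "rayproj (lam * real N) (tree_center lam zz (Some (N + 1, i))) \<in> Q N j"
  shows "cmod (1 - cdot (udir (zz (N+1) i)) (udir (zz N j))) \<le> K1 * (1 - (tanh (lam * real N))^2)"
proof -
  note nf = node_facts[OF a] and nc = node_facts[OF c]
  have lN: "lam * real N > 0" using lam_pos nf(1) by simp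
  have l2: "lam * (real (N+1) + 1/2) > 0" using lam_pos by simp
  define t where "t = tanh (lam * (real (N+1) + 1/2)) / norm (zz (N+1) i)"
  have t0: "t > 0" unfolding t_def using l2 nc(3) by simp
  have cc: "tree_center lam zz (Some (N + 1, i)) = complex_of_real t *s zz (N+1) i"
    unfolding tree_center_def t_def using rayproj_eq[OF l2 nc(3)] by simp
  have "norm (complex_of_real t *s zz (N+1) i) = t * norm (zz (N+1) i)" using t0 by (simp add: norm_smult)
  then have "norm (complex_of_real t *s zz (N+1) i) > 0" using t0 nc(3) by simp
  then have c0: "complex_of_real t *s zz (N+1) i \<noteq> 0" by auto
  define t' where "t' = tanh (lam * real N) / norm (complex_of_real t *s zz (N+1) i)"
  have t'0: "t' > 0" unfolding t'_def using lN c0 by simp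
  have pe: "rayproj (lam * real N) (tree_center lam zz (Some (N + 1, i))) =
     complex_of_real t' *s (complex_of_real t *s zz (N+1) i)"
    unfolding cc t'_def using rayproj_eq[OF lN c0] by simp
  have "udir (rayproj (lam * real N) (tree_center lam zz (Some (N + 1, i)))) = udir (zz (N+1) i)"
    unfolding pe by (simp only: udir_scale[OF t'0] udir_scale[OF t0])
  then show ?thesis using in_Q_bound[OF a ch] by simp
qed


definition Sc where "Sc = 2 * sqrt K1"
definition qq where "qq = exp (- lam)"

lemma K1_ge: "K1 \<ge> 1"
proof -
  have "\<bar>tanh (2*lam)\<bar> < 1" using tanh_real_lt_1 tanh_real_gt_neg1 by (simp add: abs_less_iff)
  then have "(tanh (2*lam))^2 < 1" using abs_square_less_1 by blast
  then show ?thesis unfolding K1_def by simp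
qed

lemma qq_facts: "qq > 0" "qq < 1" using lam_pos by (auto simp: qq_def)

lemma exp_qq: "exp (- 2 * (lam * real N)) = (qq ^ N)^2"
proof -
  have e: "exp (real (2*N) * (- lam)) = exp (-lam) ^ (2*N)" by (rule exp_of_nat_mult)
  have "(qq ^ N)^2 = exp (real (2 * N) * (- lam))"
    unfolding e qq_def by (simp add: power_mult[symmetric] mult.commute)
  then show ?thesis by (simp add: algebra_simps)
qed

lemma sqrt_bound: "sqrt (K1 * (1 - (tanh (lam * real N))^2)) \<le> Sc * qq ^ N"
proof -
  have l0: "lam * real N \<ge> 0" using lam_pos by simp
  have "K1 * (1 - (tanh (lam * real N))^2) \<le> K1 * (4 * (qq ^ N)^2)"
  proof -
    have "1 - (tanh (lam * real N))^2 \<le> 4 * (qq ^ N)^2" using tanh_sq_gap[OF l0] unfolding exp_qq .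
    then show ?thesis using K1_ge by (intro mult_left_mono) auto
  qed
  also have "\<dots> = (Sc * qq ^ N)^2" using K1_ge by (simp add: Sc_def power_mult_distrib)
  finally have "sqrt (K1 * (1 - (tanh (lam * real N))^2)) \<le> sqrt ((Sc * qq ^ N)^2)"
    by (rule real_sqrt_le_mono)
  also have "\<dots> = Sc * qq ^ N" using qq_facts K1_ge by (simp add: Sc_def)
  finally show ?thesis .
qed

lemma box_bound:
  assumes a: "Some (M, i) \<in> tree_nodes J" and w: "w \<in> tree_box lam Q (Some (M, i))"
  shows "w \<noteq> 0" "norm w < 1" "tanh (lam * real M) \<le> norm w"
    "cmod (1 - cdot (udir w) (udir (zz M i))) \<le> K1 * (1 - (tanh (lam * real M))^2)"
proof -
  note nf = node_facts[OF a]
  have lM: "lam * real M > 0" using lam_pos nf(1) by simp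
  have w1: "norm w < 1" and b: "lam * real M \<le> artanh (norm w)"
    and pq: "rayproj (lam * real M) w \<in> Q M i"
    using w by (auto simp: tree_box_def in_unit_ball bdist0)
  show "norm w < 1" by fact
  have "tanh (lam * real M) \<le> tanh (artanh (norm w))" using b by simp
  then show tw: "tanh (lam * real M) \<le> norm w" using tanh_artanh[of "norm w"] w1 by simp
  then have "norm w > 0" using lM by (smt (verit) tanh_real_pos_iff)
  then show w0: "w \<noteq> 0" by auto
  define t where "t = tanh (lam * real M) / norm w"
  have t0: "t > 0" using lM \<open>norm w > 0\<close> by (simp add: t_def)
  have "rayproj (lam * real M) w = complex_of_real t *s w" unfolding t_def by (rule rayproj_eq[OF lM w0])
  then have "udir (rayproj (lam * real M) w) = udir w" by (simp only: udir_scale[OF t0])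
  then show "cmod (1 - cdot (udir w) (udir (zz M i))) \<le> K1 * (1 - (tanh (lam * real M))^2)"
    using in_Q_bound[OF a pq] by simp
qed

lemma chain:
  assumes ge: "tree_ge lam J zz Q b a" and aS: "a = Some (N, j)" and an: "a \<in> tree_nodes J"
  shows "\<exists>M i. b = Some (M, i) \<and> b \<in> tree_nodes J \<and> N \<le> M \<and>
     sqrt (cmod (1 - cdot (udir (zz M i)) (udir (zz N j)))) \<le> Sc * (qq ^ N - qq ^ M) / (1 - qq)"
  using ge[unfolded tree_ge_def]
proof (induction rule: rtranclp_induct)
  case base
  have "zz N j \<noteq> 0" using node_facts[OF an[unfolded aS]] by simp
  then have "cdot (udir (zz N j)) (udir (zz N j)) = 1" by (simp add: cdot_self norm_udir)
  then show ?case using aS an by auto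
next
  case (step b c)
  from step.IH obtain M i where b: "b = Some (M, i)" "b \<in> tree_nodes J" "N \<le> M"
    and ih: "sqrt (cmod (1 - cdot (udir (zz M i)) (udir (zz N j)))) \<le> Sc * (qq ^ N - qq ^ M) / (1 - qq)"
    by blast
  have chd: "is_child lam J zz Q c b" using step.hyps(2) .
  then obtain i' where c: "c = Some (M + 1, i')" "c \<in> tree_nodes J"
    and ch: "rayproj (lam * real M) (tree_center lam zz (Some (M + 1, i'))) \<in> Q M i"
    unfolding is_child_def b(1) by (cases c) auto
  have cb: "cmod (1 - cdot (udir (zz (M+1) i')) (udir (zz M i))) \<le> K1 * (1 - (tanh (lam * real M))^2)"
    using child_bound[OF b(2)[unfolded b(1)] c(2)[unfolded c(1)] ch] .
  have "sqrt (cmod (1 - cdot (udir (zz (M+1) i')) (udir (zz M i)))) \<le> sqrt (K1 * (1 - (tanh (lam * real M))^2))"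
    using cb by (rule real_sqrt_le_mono)
  also have "\<dots> \<le> Sc * qq ^ M" by (rule sqrt_bound)
  finally have s1: "sqrt (cmod (1 - cdot (udir (zz (M+1) i')) (udir (zz M i)))) \<le> Sc * qq ^ M" .
  have u1: "norm (udir (zz (M+1) i')) = 1" using node_facts(3)[OF c(2)[unfolded c(1)]] by (simp add: norm_udir)
  have u2: "norm (udir (zz M i)) = 1" using node_facts(3)[OF b(2)[unfolded b(1)]] by (simp add: norm_udir)
  have u3: "norm (udir (zz N j)) = 1" using node_facts(3)[OF an[unfolded aS]] by (simp add: norm_udir)
  have "sqrt (cmod (1 - cdot (udir (zz (M+1) i')) (udir (zz N j)))) \<le>
        Sc * qq ^ M + Sc * (qq ^ N - qq ^ M) / (1 - qq)"
    using tri_dir[OF u1 u2 u3] s1 ih by linarith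
  also have "\<dots> = Sc * (qq ^ N - qq ^ (M+1)) / (1 - qq)"
    using qq_facts by (simp add: field_simps)
  finally show ?case using c b by auto
qed

lemma main_ctx:
  "\<exists>rho>0. \<forall>a\<in>tree_nodes J. a \<noteq> None \<longrightarrow>
           (\<Union>b\<in>{b \<in> tree_nodes J. tree_ge lam J zz Q b a}. tree_box lam Q b)
             \<subseteq> Vregion rho (tree_center lam zz a)"
proof (intro exI conjI ballI impI subsetI)
  define rho where "rho = (2 + (Sc / (1 - qq))^2) / qq"
  show "rho > 0" unfolding rho_def using qq_facts by (simp add: add_pos_nonneg)
  fix a w
  assume an: "a \<in> tree_nodes J" and aN: "a \<noteq> None"
    and "w \<in> (\<Union>b\<in>{b \<in> tree_nodes J. tree_ge lam J zz Q b a}. tree_box lam Q b)"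
  then obtain b where bn: "b \<in> tree_nodes J" and ge: "tree_ge lam J zz Q b a" and wb: "w \<in> tree_box lam Q b"
    by blast
  obtain N j where aS: "a = Some (N, j)" using aN by auto
  obtain M i where bS: "b = Some (M, i)" and MN: "N \<le> M"
    and ch: "sqrt (cmod (1 - cdot (udir (zz M i)) (udir (zz N j)))) \<le> Sc * (qq ^ N - qq ^ M) / (1 - qq)"
    using chain[OF ge aS an] by blast
  note bb = box_bound[OF bn[unfolded bS] wb[unfolded bS]]
  note nf = node_facts[OF an[unfolded aS]]
  note q = qq_facts
  define \<xi> where "\<xi> = udir (zz N j)"
  define X where "X = cdot (udir w) \<xi>"
  define T where "T = Sc * qq ^ N / (1 - qq)"
  have u1: "norm (udir w) = 1" using bb(1) by (simp add: norm_udir)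
  have u2: "norm (udir (zz M i)) = 1" using node_facts(3)[OF bn[unfolded bS]] by (simp add: norm_udir)
  have u3: "norm \<xi> = 1" using nf(3) by (simp add: norm_udir \<xi>_def)
  have "sqrt (cmod (1 - X)) \<le> sqrt (cmod (1 - cdot (udir w) (udir (zz M i)))) + Sc * (qq ^ N - qq ^ M) / (1 - qq)"
    using tri_dir[OF u1 u2 u3] ch unfolding X_def \<xi>_def by linarith
  moreover have "sqrt (cmod (1 - cdot (udir w) (udir (zz M i)))) \<le> Sc * qq ^ M"
    using real_sqrt_le_mono[OF bb(4)] sqrt_bound[of M] by linarith
  ultimately have "sqrt (cmod (1 - X)) \<le> Sc * qq ^ M + Sc * (qq ^ N - qq ^ M) / (1 - qq)" by linarith
  also have "\<dots> = Sc * (qq ^ N - qq ^ (M+1)) / (1 - qq)"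
    using q by (simp add: field_simps)
  also have "\<dots> \<le> T" unfolding T_def using q K1_ge
    by (intro divide_right_mono mult_left_mono) (auto simp: Sc_def)
  finally have sX: "sqrt (cmod (1 - X)) \<le> T" .
  have T0: "T \<ge> 0" unfolding T_def using q K1_ge by (auto simp: Sc_def)
  have X1: "cmod (1 - X) \<le> T^2"
  proof -
    have "cmod (1 - X) = (sqrt (cmod (1 - X)))^2" by simp
    also have "\<dots> \<le> T^2" using sX by (intro power_mono) auto
    finally show ?thesis .
  qed
  have l2: "lam * (real N + 1/2) > 0" using lam_pos by simp
  define t where "t = tanh (lam * (real N + 1/2)) / norm (zz N j)"
  have t0: "t > 0" unfolding t_def using l2 nf(3) by simp
  have cc: "tree_center lam zz a = complex_of_real t *s zz N j"
    unfolding aS tree_center_def t_def using rayproj_eq[OF l2 nf(3)] by simp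
  have nc: "norm (tree_center lam zz a) = tanh (lam * (real N + 1/2))"
    unfolding cc using t0 nf(3) l2 by (simp add: norm_smult t_def norm_divide)
  have uc: "(1 / complex_of_real (norm (tree_center lam zz a))) *s tree_center lam zz a = \<xi>"
    using udir_scale[OF t0, of "zz N j"] unfolding \<xi>_def cc udir_def by simp
  define nw where "nw = norm w"
  have cw: "cdot w \<xi> = complex_of_real nw * X"
    unfolding X_def nw_def by (subst udir_decomp[OF bb(1)]) (simp add: cdot_smult1)
  have nw1: "nw < 1" "tanh (lam * real M) \<le> nw" using bb(2,3) by (auto simp: nw_def)
  have nw0: "nw \<ge> 0" by (simp add: nw_def)
  have "1 - cdot w \<xi> = complex_of_real (1 - nw) + complex_of_real nw * (1 - X)"
    unfolding cw by (simp add: algebra_simps)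
  then have "cmod (1 - cdot w \<xi>) \<le> cmod (complex_of_real (1 - nw)) + cmod (complex_of_real nw * (1 - X))"
    by (metis norm_triangle_ineq)
  also have "\<dots> = (1 - nw) + nw * cmod (1 - X)" using nw1 nw0 by (simp only: norm_mult norm_of_real abs_of_nonneg)
  also have "\<dots> \<le> (1 - nw) + 1 * T^2" using nw1 nw0 X1
    by (intro add_left_mono mult_mono) auto
  also have "1 - nw \<le> 1 - tanh (lam * real N)"
    using nw1 MN lam_pos by (smt (verit) mult_left_mono of_nat_mono tanh_real_le_iff)
  also have "1 - tanh (lam * real N) \<le> 2 * (qq ^ N)^2"
    using tanh_gap_upper[of "lam * real N"] lam_pos unfolding exp_qq by simp
  finally have lhs: "cmod (1 - cdot w \<xi>) \<le> (2 + (Sc / (1 - qq))^2) * (qq ^ N)^2"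
    by (simp add: T_def power_mult_distrib power_divide algebra_simps)
  have "exp (- 2 * (lam * (real N + 1/2))) = (qq ^ N)^2 * qq"
  proof -
    have "exp (- 2 * (lam * (real N + 1/2))) = exp (- 2 * (lam * real N)) * exp (- lam)"
      by (simp add: exp_add[symmetric] algebra_simps)
    then show ?thesis unfolding exp_qq by (simp add: qq_def)
  qed
  then have "(qq ^ N)^2 * qq \<le> 1 - norm (tree_center lam zz a)"
    using tanh_gap_lower[of "lam * (real N + 1/2)"] l2 nc by simp
  then have "(2 + (Sc / (1 - qq))^2) * (qq ^ N)^2 \<le> rho * (1 - norm (tree_center lam zz a))"
  proof -
    define C where "C = 2 + (Sc / (1 - qq))^2"
    have C0: "C / qq \<ge> 0" using q by (simp add: C_def add_nonneg_nonneg)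
    assume h: "(qq ^ N)^2 * qq \<le> 1 - norm (tree_center lam zz a)"
    have "C * (qq ^ N)^2 = C / qq * ((qq ^ N)^2 * qq)" using q by simp
    also have "\<dots> \<le> C / qq * (1 - norm (tree_center lam zz a))" using h C0 by (rule mult_left_mono)
    finally show ?thesis by (simp add: rho_def C_def)
  qed
  with lhs have "cmod (1 - cdot w \<xi>) \<le> rho * (1 - norm (tree_center lam zz a))" by linarith
  moreover have "w \<in> unit_ball" using bb(2) by (simp add: in_unit_ball)
  ultimately show "w \<in> Vregion rho (tree_center lam zz a)" unfolding Vregion_def uc by simp
qed
end

theorem lemma2p4:
  fixes lam :: real and J :: "nat \<Rightarrow> nat"
    and zz :: "nat \<Rightarrow> nat \<Rightarrow> complex^'n"
    and Q :: "nat \<Rightarrow> nat \<Rightarrow> (complex^'n) set"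
  assumes "bergman_tree_data lam J zz Q"
  shows "\<exists>rho>0. \<forall>a\<in>tree_nodes J. a \<noteq> None \<longrightarrow>
           (\<Union>b\<in>{b \<in> tree_nodes J. tree_ge lam J zz Q b a}. tree_box lam Q b)
             \<subseteq> Vregion rho (tree_center lam zz a)"
  by (rule main_ctx[OF assms])

end
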